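(* Let $T$ be a directed tree with at least one edge whose underlying undirected graph is a path or a caterpillar. Then $T$ has span $1$.
   Context: A directed tree is a DAG (directed acyclic graph) whose underlying undirected graph is a tree. A caterpillar is a tree such that removing all its leaves yields a path (possibly empty or a single vertex). An upward-planar layered drawing of a DAG $G$ maps each vertex $v$ to a point in the plane whose y-coordinate $y(v)$ is an integer, and each edge $(u,v)$ (directed from tail $u$ to head $v$) to a strictly y-monotone curve going upward from $u$ to $v$ (so $y(u)<y(v)$), such that no two edges intersect except at common endpoints. The span of an edge $(u,v)$ in such a drawing $\Gamma$ is $y(v)-y(u)$; the span of $\Gamma$ is the maximum span of its edges; the span of an upward-planar DAG is the minimum span over all its upward-planar layered drawings. No embedding is prescribed. *)

theory Defs
  imports "HOL-Analysis.Analysis"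
begin

definition underlying :: "('a \<times> 'a) set \<Rightarrow> 'a set set" where
  "underlying E = {{u, v} | u v. (u, v) \<in> E}"

definition is_walk :: "'a set set \<Rightarrow> 'a list \<Rightarrow> bool" where
  "is_walk U xs \<longleftrightarrow> xs \<noteq> [] \<and> (\<forall>i. Suc i < length xs \<longrightarrow> {xs ! i, xs ! Suc i} \<in> U)"

definition ug_connected :: "'a set \<Rightarrow> 'a set set \<Rightarrow> bool" where
  "ug_connected V U \<longleftrightarrow>
     (\<forall>u\<in>V. \<forall>v\<in>V. \<exists>xs. is_walk U xs \<and> set xs \<subseteq> V \<and> hd xs = u \<and> last xs = v)"

definition has_cycle :: "'a set \<Rightarrow> 'a set set \<Rightarrow> bool" where
  "has_cycle V U \<longleftrightarrow>
     (\<exists>xs. length xs \<ge> 3 \<and> distinct xs \<and> set xs \<subseteq> V \<and> is_walk U xs \<and> {last xs, hd xs} \<in> U)"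

definition is_ug_tree :: "'a set \<Rightarrow> 'a set set \<Rightarrow> bool" where
  "is_ug_tree V U \<longleftrightarrow> finite V \<and> V \<noteq> {} \<and> (\<forall>e\<in>U. e \<subseteq> V \<and> card e = 2)
     \<and> ug_connected V U \<and> \<not> has_cycle V U"

definition is_path_graph :: "'a set \<Rightarrow> 'a set set \<Rightarrow> bool" where
  "is_path_graph V U \<longleftrightarrow>
     (\<exists>xs. distinct xs \<and> set xs = V \<and> U = {{xs ! i, xs ! Suc i} | i. Suc i < length xs})"

definition ug_degree :: "'a set set \<Rightarrow> 'a \<Rightarrow> nat" where
  "ug_degree U v = card {e \<in> U. v \<in> e}"

definition leaves :: "'a set \<Rightarrow> 'a set set \<Rightarrow> 'a set" where
  "leaves V U = {v \<in> V. ug_degree U v = 1}"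

definition is_caterpillar :: "'a set \<Rightarrow> 'a set set \<Rightarrow> bool" where
  "is_caterpillar V U \<longleftrightarrow> is_ug_tree V U \<and>
     (let W = V - leaves V U in is_path_graph W {e \<in> U. e \<subseteq> W})"

definition is_dag :: "'a set \<Rightarrow> ('a \<times> 'a) set \<Rightarrow> bool" where
  "is_dag V E \<longleftrightarrow> finite V \<and> E \<subseteq> V \<times> V \<and> acyclic E"

definition directed_tree :: "'a set \<Rightarrow> ('a \<times> 'a) set \<Rightarrow> bool" where
  "directed_tree V E \<longleftrightarrow> is_dag V E \<and> (\<forall>u v. (u, v) \<in> E \<longrightarrow> (v, u) \<notin> E)
     \<and> is_ug_tree V (underlying E)"

definition upward_planar_layered_drawing ::
  "'a set \<Rightarrow> ('a \<times> 'a) set \<Rightarrow> ('a \<Rightarrow> real) \<Rightarrow> ('a \<Rightarrow> int)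
     \<Rightarrow> ('a \<times> 'a \<Rightarrow> real \<Rightarrow> real \<times> real) \<Rightarrow> bool" where
  "upward_planar_layered_drawing V E x y c \<longleftrightarrow>
     (let pt = (\<lambda>v. (x v, real_of_int (y v))) in
       inj_on pt V \<and>
       (\<forall>e\<in>E. path (c e) \<and> pathstart (c e) = pt (fst e) \<and> pathfinish (c e) = pt (snd e)
              \<and> strict_mono_on {0..1} (\<lambda>t. snd (c e t))) \<and>
       (\<forall>e\<in>E. \<forall>w\<in>V. w \<noteq> fst e \<and> w \<noteq> snd e \<longrightarrow> pt w \<notin> path_image (c e)) \<and>
       (\<forall>e\<in>E. \<forall>f\<in>E. e \<noteq> f \<longrightarrow>
          path_image (c e) \<inter> path_image (c f) \<subseteq> pt ` ({fst e, snd e} \<inter> {fst f, snd f})))"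

definition edge_span :: "('a \<Rightarrow> int) \<Rightarrow> 'a \<times> 'a \<Rightarrow> int" where
  "edge_span y e = y (snd e) - y (fst e)"

definition drawing_span :: "('a \<times> 'a) set \<Rightarrow> ('a \<Rightarrow> int) \<Rightarrow> int" where
  "drawing_span E y = Max (edge_span y ` E)"

definition drawing_spans :: "'a set \<Rightarrow> ('a \<times> 'a) set \<Rightarrow> int set" where
  "drawing_spans V E = {drawing_span E y | x y c. upward_planar_layered_drawing V E x y c}"

definition has_span :: "'a set \<Rightarrow> ('a \<times> 'a) set \<Rightarrow> int \<Rightarrow> bool" where
  "has_span V E s \<longleftrightarrow> s \<in> drawing_spans V E \<and> (\<forall>t\<in>drawing_spans V E. s \<le> t)"

end

theory Submission
  imports Defs
begin

lemma lp_comp: "linepath (a1::real, a2::real) (b1, b2) t = ((1-t)*a1 + t*b1, (1-t)*a2 + t*b2)"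
  by (simp add: linepath_def)

lemma drawing_exists:
  assumes EV: "E \<subseteq> V \<times> V" and inj: "inj_on x V"
    and lay: "\<forall>e\<in>E. y (snd e) = y (fst e) + 1"
    and noinv: "\<forall>e\<in>E. \<forall>f\<in>E. y (fst e) = y (fst f) \<longrightarrow> \<not> (x (fst e) < x (fst f) \<and> x (snd f) < x (snd e))"
  shows "upward_planar_layered_drawing V E x y
     (\<lambda>e. linepath (x (fst e), real_of_int (y (fst e))) (x (snd e), real_of_int (y (snd e))))"
proof -
  define pt where "pt = (\<lambda>v. (x v, real_of_int (y v)))"
  define c where "c = (\<lambda>e. linepath (pt (fst e)) (pt (snd e)))"
  have injpt: "inj_on pt V" using inj unfolding pt_def inj_on_def by auto
  have cE: "c e t = ((1-t) * x (fst e) + t * x (snd e), real_of_int (y (fst e)) + t)" if "e \<in> E" for e t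
    using lay that by (simp add: c_def pt_def lp_comp algebra_simps)
  have int01: "t = 0 \<or> t = 1" if "0 \<le> t" "t \<le> 1" "real_of_int a + t = real_of_int b" for t a b
  proof -
    have "t = real_of_int (b - a)" using that by simp
    moreover have "0 \<le> b - a" "b - a \<le> 1" using that by linarith+
    ultimately show ?thesis by (smt (verit) of_int_eq_0_iff of_int_1)
  qed
  have vert: "w = fst e \<or> w = snd e" if hw: "w \<in> V" "e \<in> E" "pt w \<in> path_image (c e)" for w e
  proof -
    obtain t where t: "t \<in> {0..1}" "pt w = c e t" using hw(3) unfolding path_image_def by auto
    then have "real_of_int (y (fst e)) + t = real_of_int (y w)" using cE[OF hw(2)] by (simp add: pt_def)
    then have "t = 0 \<or> t = 1" using int01 t(1) by auto
    then have "pt w = pt (fst e) \<or> pt w = pt (snd e)" using t cE[OF hw(2)] lay hw(2) by (auto simp: pt_def)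
    moreover have "fst e \<in> V" "snd e \<in> V" using EV hw(2) by auto
    ultimately show ?thesis using injpt hw(1) unfolding inj_on_def by blast
  qed
  have A: "\<forall>e\<in>E. path (c e) \<and> pathstart (c e) = pt (fst e) \<and> pathfinish (c e) = pt (snd e)
              \<and> strict_mono_on {0..1} (\<lambda>t. snd (c e t))"
    using cE by (auto simp: c_def strict_mono_on_def)
  have B: "\<forall>e\<in>E. \<forall>w\<in>V. w \<noteq> fst e \<and> w \<noteq> snd e \<longrightarrow> pt w \<notin> path_image (c e)"
    using vert by blast
  have C: "path_image (c e) \<inter> path_image (c f) \<subseteq> pt ` ({fst e, snd e} \<inter> {fst f, snd f})"
    if e: "e \<in> E" and f: "f \<in> E" and ef: "e \<noteq> f" for e f
  proof
    fix z assume z: "z \<in> path_image (c e) \<inter> path_image (c f)"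
    obtain t where t: "t \<in> {0..1}" "z = c e t" using z unfolding path_image_def by auto
    obtain s where s: "s \<in> {0..1}" "z = c f s" using z unfolding path_image_def by auto
    have Ve: "fst e \<in> V" "snd e \<in> V" "fst f \<in> V" "snd f \<in> V" using EV e f by auto
    have ends: "z \<in> pt ` ({fst e, snd e} \<inter> {fst f, snd f})" if "z = pt a" "a \<in> {fst e, snd e}" "a \<in> {fst f, snd f}" for a
      using that by blast
    show "z \<in> pt ` ({fst e, snd e} \<inter> {fst f, snd f})"
    proof (cases "t = 0 \<or> t = 1 \<or> s = 0 \<or> s = 1")
      case True
      then show ?thesis
      proof (elim disjE)
        assume "t = 0" then have "z = pt (fst e)" using t cE[OF e] by (simp add: pt_def)
        moreover have "pt (fst e) \<in> path_image (c f)" using z calculation by auto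
        ultimately show ?thesis using vert[of "fst e" f] Ve f by blast
      next
        assume "t = 1" then have "z = pt (snd e)" using t cE[OF e] lay e by (simp add: pt_def)
        moreover have "pt (snd e) \<in> path_image (c f)" using z calculation by auto
        ultimately show ?thesis using vert[of "snd e" f] Ve f by blast
      next
        assume "s = 0" then have "z = pt (fst f)" using s cE[OF f] by (simp add: pt_def)
        moreover have "pt (fst f) \<in> path_image (c e)" using z calculation by auto
        ultimately show ?thesis using vert[of "fst f" e] Ve e by blast
      next
        assume "s = 1" then have "z = pt (snd f)" using s cE[OF f] lay f by (simp add: pt_def)
        moreover have "pt (snd f) \<in> path_image (c e)" using z calculation by auto
        ultimately show ?thesis using vert[of "snd f" e] Ve e by blast
      qed
    next
      case False
      then have ts: "0 < t" "t < 1" "0 < s" "s < 1" using t s by auto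
      have yy: "real_of_int (y (fst e)) + t = real_of_int (y (fst f)) + s"
        using t s cE[OF e] cE[OF f] by simp
      have "y (fst e) = y (fst f)"
      proof -
        have "real_of_int (y (fst e) - y (fst f)) = s - t" using yy by simp
        moreover have "s - t < 1" "s - t > -1" using ts by auto
        ultimately have "y (fst e) - y (fst f) < 1" "y (fst e) - y (fst f) > -1"
          by linarith+
        then show ?thesis by linarith
      qed
      then have st: "s = t" using yy by simp
      have xx: "(1-t) * x (fst e) + t * x (snd e) = (1-t) * x (fst f) + t * x (snd f)"
        using t s cE[OF e] cE[OF f] st by simp
      have n1: "\<not> (x (fst e) < x (fst f) \<and> x (snd f) < x (snd e))"
        and n2: "\<not> (x (fst f) < x (fst e) \<and> x (snd e) < x (snd f))"
        using noinv e f \<open>y (fst e) = y (fst f)\<close> by auto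
      have "(1-t) * (x (fst e) - x (fst f)) + t * (x (snd e) - x (snd f)) = 0"
        using xx by (simp add: algebra_simps)
      then have eq0: "(1-t) * a + t * b = 0" if "a = x (fst e) - x (fst f)" "b = x (snd e) - x (snd f)" for a b
        using that by simp
      have key: "a = 0 \<and> b = 0" if "(1-t) * a + t * b = 0" "\<not> (a < 0 \<and> 0 < b)" "\<not> (0 < a \<and> b < 0)" for a b :: real
      proof -
        have p1: "0 < 1 - t" using ts by simp
        consider "a < 0" | "a = 0" | "a > 0" by linarith
        then show ?thesis
        proof cases
          case 1
          then have "(1-t) * a < 0" using p1 by (simp add: mult_pos_neg)
          then have "t * b > 0" using that(1) by linarith
          then have "b > 0" using ts by (simp add: zero_less_mult_iff)
          then show ?thesis using that 1 by simp
        next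
          case 2
          then have "t * b = 0" using that(1) by simp
          then show ?thesis using ts 2 by simp
        next
          case 3
          then have "(1-t) * a > 0" using p1 by simp
          then have "t * b < 0" using that(1) by linarith
          then have "b < 0" using ts by (simp add: mult_less_0_iff)
          then show ?thesis using that 3 by simp
        qed
      qed
      have "x (fst e) - x (fst f) = 0 \<and> x (snd e) - x (snd f) = 0"
        using key[OF eq0[OF refl refl]] n1 n2 by linarith
      then have "x (fst e) = x (fst f) \<and> x (snd e) = x (snd f)" by simp
      then have "fst e = fst f" "snd e = snd f"
        using inj Ve unfolding inj_on_def by auto
      then have "e = f" by (simp add: prod_eq_iff)
      then show ?thesis using ef by simp
    qed
  qed
  show ?thesis
    unfolding upward_planar_layered_drawing_def Let_def
    using injpt A B C unfolding pt_def c_def by blast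
qed


lemma span_one:
  assumes fin: "finite V" and EV: "E \<subseteq> V \<times> V" and ne: "E \<noteq> {}"
    and dr: "upward_planar_layered_drawing V E x y c"
    and lay: "\<forall>e\<in>E. y (snd e) = y (fst e) + 1"
  shows "has_span V E 1"
proof -
  have finE: "finite E" using fin EV finite_subset by blast
  have "edge_span y ` E = {1}" using lay ne by (auto simp: edge_span_def)
  then have "drawing_span E y = 1" by (simp add: drawing_span_def)
  then have in1: "1 \<in> drawing_spans V E" using dr unfolding drawing_spans_def by (metis (mono_tags, lifting) mem_Collect_eq)
  have ge: "1 \<le> t" if tin: "t \<in> drawing_spans V E" for t
  proof -
    obtain x' y' c' where d: "upward_planar_layered_drawing V E x' y' c'" and t: "t = drawing_span E y'"
      using tin unfolding drawing_spans_def by blast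
    obtain e where e: "e \<in> E" using ne by blast
    have "pathstart (c' e) = (x' (fst e), real_of_int (y' (fst e)))"
      "pathfinish (c' e) = (x' (snd e), real_of_int (y' (snd e)))"
      "strict_mono_on {0..1} (\<lambda>t. snd (c' e t))"
      using d e unfolding upward_planar_layered_drawing_def Let_def by auto
    then have "snd (c' e 0) < snd (c' e 1)" unfolding strict_mono_on_def by auto
    then have "real_of_int (y' (fst e)) < real_of_int (y' (snd e))"
      using \<open>pathstart (c' e) = _\<close> \<open>pathfinish (c' e) = _\<close>
      by (simp add: pathstart_def pathfinish_def)
    then have "1 \<le> edge_span y' e" by (simp add: edge_span_def)
    also have "edge_span y' e \<le> Max (edge_span y' ` E)" using finE e by simp
    finally show ?thesis using t by (simp add: drawing_span_def)
  qed
  show ?thesis unfolding has_span_def using in1 ge by blast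
qed

lemma noinv_lemma:
  fixes p :: "'a \<Rightarrow> real" and base :: "'a \<times> 'a \<Rightarrow> nat"
  assumes lay: "\<forall>e\<in>E. y (snd e) = y (fst e) + (1::int)"
    and hub: "\<forall>e\<in>E. h (base e) \<in> {fst e, snd e}"
    and rng: "\<forall>e\<in>E. 2 * real (base e) \<le> p (fst e) \<and> p (fst e) \<le> 2 * real (base e) + 2
                  \<and> 2 * real (base e) \<le> p (snd e) \<and> p (snd e) \<le> 2 * real (base e) + 2"
  shows "\<forall>e\<in>E. \<forall>f\<in>E. y (fst e) = y (fst f) \<longrightarrow> \<not> (p (fst e) < p (fst f) \<and> p (snd f) < p (snd e))"
proof (intro ballI impI notI)
  fix e f assume e: "e \<in> E" and f: "f \<in> E" and yy: "y (fst e) = y (fst f)"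
    and inv: "p (fst e) < p (fst f) \<and> p (snd f) < p (snd e)"
  consider "base e = base f" | "base e < base f" | "base f < base e" by linarith
  then show False
  proof cases
    case 1
    have w1: "h (base e) = fst e \<or> h (base e) = snd e" using hub e by auto
    have w2: "h (base e) = fst f \<or> h (base e) = snd f" using hub f 1 by auto
    have l1: "y (snd e) = y (fst e) + 1" and l2: "y (snd f) = y (fst f) + 1" using lay e f by auto
    from w1 w2 show False
    proof (elim disjE)
      assume "h (base e) = fst e" "h (base e) = fst f"
      then show False using inv by simp
    next
      assume "h (base e) = fst e" "h (base e) = snd f"
      then show False using l2 yy by simp
    next
      assume "h (base e) = snd e" "h (base e) = fst f"
      then show False using l1 yy by simp
    next
      assume "h (base e) = snd e" "h (base e) = snd f"
      then show False using inv by simp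
    qed
  next
    case 2
    then have "real (base e) + 1 \<le> real (base f)" by simp
    moreover have "p (snd e) \<le> 2 * real (base e) + 2" "2 * real (base f) \<le> p (snd f)" using rng e f by auto
    ultimately show False using inv by linarith
  next
    case 3
    then have "real (base f) + 1 \<le> real (base e)" by simp
    moreover have "p (fst f) \<le> 2 * real (base f) + 2" "2 * real (base e) \<le> p (fst e)" using rng e f by auto
    ultimately show False using inv by linarith
  qed
qed


primrec layr :: "('a \<times> 'a) set \<Rightarrow> 'a list \<Rightarrow> nat \<Rightarrow> int" where
  "layr E xs 0 = 0"
| "layr E xs (Suc i) = layr E xs i + (if (xs ! i, xs ! Suc i) \<in> E then 1 else -1)"

lemma two_nat_frac:
  fixes k m :: nat and f g :: real
  assumes "0 \<le> f" "f < 1" "0 \<le> g" "g < 1" "2 * real k + f = 2 * real m + g"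
  shows "k = m \<and> f = g"
proof -
  consider "k < m" | "k = m" | "m < k" by linarith
  then show ?thesis
  proof cases
    case 1 then have "real k + 1 \<le> real m" by simp
    then show ?thesis using assms by linarith
  next
    case 2
    then have "real k = real m" by simp
    then show ?thesis using assms(5) 2 by linarith
  next
    case 3 then have "real m + 1 \<le> real k" by simp
    then show ?thesis using assms by linarith
  qed
qed

lemma core:
  fixes xs :: "'a list" and att :: "'a \<Rightarrow> 'a"
  assumes fin: "finite V" and EV: "E \<subseteq> V \<times> V" and ne: "E \<noteq> {}"
    and asym: "\<forall>u v. (u, v) \<in> E \<longrightarrow> (v, u) \<notin> E"
    and dist: "distinct xs" and sub: "set xs \<subseteq> V"
    and attin: "\<forall>l\<in>V - set xs. att l \<in> set xs"
    and cls: "\<forall>u v. (u, v) \<in> E \<longrightarrow> (\<exists>i. Suc i < length xs \<and> {u, v} = {xs ! i, xs ! Suc i})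
               \<or> (u \<in> V - set xs \<and> v = att u) \<or> (v \<in> V - set xs \<and> u = att v)"
  shows "has_span V E 1"
proof -
  define idx where "idx v = (THE i. i < length xs \<and> xs ! i = v)" for v
  have idx_nth: "idx (xs ! i) = i" if "i < length xs" for i
    unfolding idx_def using that dist by (auto simp: nth_eq_iff_index_eq)
  have idx_in: "idx v < length xs \<and> xs ! (idx v) = v" if vin: "v \<in> set xs" for v
  proof -
    obtain i where "i < length xs" "xs ! i = v" using vin by (auto simp: in_set_conv_nth)
    then show ?thesis using idx_nth by auto
  qed
  define y where "y v = (if v \<in> set xs then layr E xs (idx v)
      else layr E xs (idx (att v)) + (if (att v, v) \<in> E then 1 else -1))" for v
  obtain g :: "'a \<Rightarrow> nat" and n where "g ` V = {i. i < n}" and ginj: "inj_on g V"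
    using finite_imp_inj_to_nat_seg[OF fin] by blast
  define fr where "fr v = 1 - 1 / (real (g v) + 2)" for v
  have frb: "0 \<le> fr v \<and> fr v < 1" for v
    unfolding fr_def by (simp add: field_simps)
  have frinj: "g a = g b" if "fr a = fr b" for a b
    using that unfolding fr_def by (simp add: field_simps)
  define p where "p v = (if v \<in> set xs then 2 * real (idx v) else 2 * real (idx (att v)) + fr v)" for v
  define base where "base e = (if fst e \<in> set xs \<and> snd e \<in> set xs then min (idx (fst e)) (idx (snd e))
      else if fst e \<in> set xs then idx (fst e) else idx (snd e))" for e
  have pinj: "inj_on p V"
  proof (rule inj_onI)
    fix a b assume a: "a \<in> V" and b: "b \<in> V" and pab: "p a = p b"
    show "a = b"
    proof (cases "a \<in> set xs")
      case True
      note aT = True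
      show ?thesis
      proof (cases "b \<in> set xs")
        case True
        then have "idx a = idx b" using aT pab by (simp add: p_def)
        then show ?thesis using idx_in aT True by metis
      next
        case False
        then have "2 * real (idx a) + 0 = 2 * real (idx (att b)) + fr b" using aT pab by (simp add: p_def)
        then have "idx a = idx (att b) \<and> 0 = fr b"
          by (rule two_nat_frac[rotated 4]) (use frb[of b] in auto)
        then have "0 = fr b" by simp
        then show ?thesis unfolding fr_def by (simp add: field_simps)
      qed
    next
      case False
      note aF = False
      show ?thesis
      proof (cases "b \<in> set xs")
        case True
        then have "2 * real (idx b) + 0 = 2 * real (idx (att a)) + fr a" using aF pab by (simp add: p_def)
        then have "idx b = idx (att a) \<and> 0 = fr a"
          by (rule two_nat_frac[rotated 4]) (use frb[of a] in auto)
        then have "0 = fr a" by simp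
        then show ?thesis unfolding fr_def by (simp add: field_simps)
      next
        case False
        then have "2 * real (idx (att a)) + fr a = 2 * real (idx (att b)) + fr b" using aF pab by (simp add: p_def)
        then have "idx (att a) = idx (att b) \<and> fr a = fr b"
          by (rule two_nat_frac[rotated 4]) (use frb[of a] frb[of b] in auto)
        then have "fr a = fr b" by simp
        then show ?thesis using frinj ginj a b unfolding inj_on_def by blast
      qed
    qed
  qed
  have yx: "y (xs ! i) = layr E xs i" if "i < length xs" for i
    using that idx_nth by (simp add: y_def)
  have edge_facts: "y v = y u + 1 \<and> base (u, v) < length xs \<and> xs ! base (u, v) \<in> {u, v}
      \<and> 2 * real (base (u, v)) \<le> p u \<and> p u \<le> 2 * real (base (u, v)) + 2
      \<and> 2 * real (base (u, v)) \<le> p v \<and> p v \<le> 2 * real (base (u, v)) + 2"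
    if uv: "(u, v) \<in> E" for u v
  proof -
    have nuv: "(v, u) \<notin> E" using asym uv by blast
    from cls uv consider (sp) i where "Suc i < length xs" "{u, v} = {xs ! i, xs ! Suc i}"
      | (lu) "u \<in> V - set xs" "v = att u" | (lv) "v \<in> V - set xs" "u = att v" by blast
    then show ?thesis
    proof cases
      case sp
      have i1: "i < length xs" using sp(1) by simp
      have ne: "xs ! i \<noteq> xs ! Suc i" using dist sp(1) by (simp add: nth_eq_iff_index_eq)
      have inx: "xs ! i \<in> set xs" "xs ! Suc i \<in> set xs" using sp(1) i1 by auto
      have b: "base (xs ! i, xs ! Suc i) = i" "base (xs ! Suc i, xs ! i) = i"
        using inx idx_nth[OF i1] idx_nth[OF sp(1)] by (auto simp: base_def)
      have pp: "p (xs ! i) = 2 * real i" "p (xs ! Suc i) = 2 * real i + 2"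
        using inx idx_nth[OF i1] idx_nth[OF sp(1)] by (auto simp: p_def)
      from sp(2) have "(u = xs ! i \<and> v = xs ! Suc i) \<or> (u = xs ! Suc i \<and> v = xs ! i)"
        by (auto simp: doubleton_eq_iff)
      then show ?thesis
      proof
        assume h: "u = xs ! i \<and> v = xs ! Suc i"
        then show ?thesis using uv yx[OF i1] yx[OF sp(1)] b pp i1 by auto
      next
        assume h: "u = xs ! Suc i \<and> v = xs ! i"
        then have "(xs ! i, xs ! Suc i) \<notin> E" using uv asym by blast
        then show ?thesis using h yx[OF i1] yx[OF sp(1)] b pp i1 by auto
      qed
    next
      case lu
      have vin: "v \<in> set xs" using lu attin by blast
      have "y u = y v - 1" using lu nuv vin by (simp add: y_def)
      moreover have "base (u, v) = idx v" using lu vin by (simp add: base_def)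
      moreover have "p v = 2 * real (idx v)" "p u = 2 * real (idx v) + fr u"
        using lu vin by (auto simp: p_def)
      ultimately show ?thesis using idx_in[OF vin] frb[of u] by auto
    next
      case lv
      have uin: "u \<in> set xs" using lv attin by blast
      have "y v = y u + 1" using lv uv uin by (simp add: y_def)
      moreover have "base (u, v) = idx u" using lv uin by (simp add: base_def)
      moreover have "p u = 2 * real (idx u)" "p v = 2 * real (idx u) + fr v"
        using lv uin by (auto simp: p_def)
      ultimately show ?thesis using idx_in[OF uin] frb[of v] by auto
    qed
  qed
  have lay: "\<forall>e\<in>E. y (snd e) = y (fst e) + 1" using edge_facts by auto
  have hub: "\<forall>e\<in>E. (\<lambda>i. xs ! i) (base e) \<in> {fst e, snd e}"
  proof
    fix e assume "e \<in> E"
    then have "(fst e, snd e) \<in> E" by simp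
    then show "(\<lambda>i. xs ! i) (base e) \<in> {fst e, snd e}" using edge_facts[of "fst e" "snd e"] by simp
  qed
  have rng: "\<forall>e\<in>E. 2 * real (base e) \<le> p (fst e) \<and> p (fst e) \<le> 2 * real (base e) + 2
                  \<and> 2 * real (base e) \<le> p (snd e) \<and> p (snd e) \<le> 2 * real (base e) + 2"
    using edge_facts by auto
  have ni: "\<forall>e\<in>E. \<forall>f\<in>E. y (fst e) = y (fst f) \<longrightarrow> \<not> (p (fst e) < p (fst f) \<and> p (snd f) < p (snd e))"
    using noinv_lemma[OF lay hub rng] .
  have dr: "upward_planar_layered_drawing V E p y
     (\<lambda>e. linepath (p (fst e), real_of_int (y (fst e))) (p (snd e), real_of_int (y (snd e))))"
    using drawing_exists[OF EV pinj lay ni] .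
  show ?thesis using span_one[OF fin EV ne dr lay] .
qed


lemma leaf_uniq:
  assumes "l \<in> leaves V U" "e \<in> U" "l \<in> e" "e' \<in> U" "l \<in> e'"
  shows "e = e'"
proof -
  have "card {e \<in> U. l \<in> e} = 1" using assms(1) by (simp add: leaves_def ug_degree_def)
  then obtain s where S: "{e \<in> U. l \<in> e} = {s}" by (rule card_1_singletonE)
  have "e \<in> {e \<in> U. l \<in> e}" "e' \<in> {e \<in> U. l \<in> e}" using assms by simp_all
  then show ?thesis unfolding S by simp
qed

lemma leaf_has_edge:
  assumes "l \<in> leaves V U"
  shows "\<exists>e\<in>U. l \<in> e"
proof -
  have "card {e \<in> U. l \<in> e} = 1" using assms(1) by (simp add: leaves_def ug_degree_def)
  then obtain s where S: "{e \<in> U. l \<in> e} = {s}" by (rule card_1_singletonE)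
  have "s \<in> {e \<in> U. l \<in> e}" unfolding S by simp
  then show ?thesis by blast
qed

lemma two_leaves:
  assumes tree: "is_ug_tree V U" and l: "l \<in> leaves V U" and w: "w \<in> leaves V U"
    and lw: "{l, w} \<in> U"
  shows "V \<subseteq> {l, w}"
proof
  fix z assume z: "z \<in> V"
  have lV: "l \<in> V" using l by (simp add: leaves_def)
  have "ug_connected V U" using tree unfolding is_ug_tree_def by simp
  then have "\<exists>xs. is_walk U xs \<and> set xs \<subseteq> V \<and> hd xs = l \<and> last xs = z"
    unfolding ug_connected_def using z lV by simp
  then obtain ws where ws: "is_walk U ws" "hd ws = l" "last ws = z" by blast
  have nen: "ws \<noteq> []" using ws(1) by (simp add: is_walk_def)
  have all: "ws ! i \<in> {l, w}" if "i < length ws" for i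
    using that
  proof (induction i)
    case 0
    then show ?case using ws(2) nen by (simp add: hd_conv_nth)
  next
    case (Suc i)
    have ed: "{ws ! i, ws ! Suc i} \<in> U" using ws(1) Suc.prems by (simp add: is_walk_def)
    have "ws ! i \<in> {l, w}" using Suc by simp
    then have "{ws ! i, ws ! Suc i} = {l, w}"
    proof
      assume "ws ! i = l"
      then show ?thesis using leaf_uniq[OF l ed _ lw] by simp
    next
      assume "ws ! i \<in> {w}"
      then show ?thesis using leaf_uniq[OF w ed _ lw] by simp
    qed
    then show ?case by blast
  qed
  have "z = ws ! (length ws - 1)" using ws(3) nen by (simp add: last_conv_nth)
  then show "z \<in> {l, w}" using all nen by simp
qed

theorem mainTheorem7:
  fixes V :: "'a set" and E :: "('a \<times> 'a) set"
  assumes "directed_tree V E"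
    and "E \<noteq> {}"
    and "is_path_graph V (underlying E) \<or> is_caterpillar V (underlying E)"
  shows "has_span V E 1"
proof -
  define U where "U = underlying E"
  have fin: "finite V" and EV: "E \<subseteq> V \<times> V" and asym: "\<forall>u v. (u, v) \<in> E \<longrightarrow> (v, u) \<notin> E"
    and tree: "is_ug_tree V U"
    using assms(1) unfolding directed_tree_def is_dag_def U_def by auto
  have inU: "{u, v} \<in> U" if "(u, v) \<in> E" for u v
    using that unfolding U_def underlying_def by blast
  have T1: "e \<subseteq> V \<and> card e = 2" if "e \<in> U" for e
    using tree that unfolding is_ug_tree_def by blast
  have neq: "u \<noteq> v" if "{u, v} \<in> U" for u v
    using T1[OF that] by (cases "u = v") auto
  from assms(3) show ?thesis
  proof
    assume "is_path_graph V (underlying E)"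
    then have "is_path_graph V U" by (simp add: U_def)
    then obtain xs where xs: "distinct xs" "set xs = V"
      "U = {{xs ! i, xs ! Suc i} | i. Suc i < length xs}"
      unfolding is_path_graph_def by blast
    show ?thesis
    proof (rule core[OF fin EV assms(2) asym xs(1), where att = id])
      show "set xs \<subseteq> V" using xs by simp
      show "\<forall>l\<in>V - set xs. id l \<in> set xs" using xs by simp
      show "\<forall>u v. (u, v) \<in> E \<longrightarrow> (\<exists>i. Suc i < length xs \<and> {u, v} = {xs ! i, xs ! Suc i})
               \<or> (u \<in> V - set xs \<and> v = id u) \<or> (v \<in> V - set xs \<and> u = id v)"
      proof (intro allI impI disjI1)
        fix u v assume "(u, v) \<in> E"
        then have "{u, v} \<in> {{xs ! i, xs ! Suc i} | i. Suc i < length xs}" using inU xs(3) by simp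
        then show "\<exists>i. Suc i < length xs \<and> {u, v} = {xs ! i, xs ! Suc i}" by blast
      qed
    qed
  next
    assume cat: "is_caterpillar V (underlying E)"
    define W where "W = V - leaves V U"
    have "is_path_graph W {e \<in> U. e \<subseteq> W}"
      using cat unfolding is_caterpillar_def U_def W_def Let_def by simp
    then obtain xs where xs: "distinct xs" "set xs = W"
      "{e \<in> U. e \<subseteq> W} = {{xs ! i, xs ! Suc i} | i. Suc i < length xs}"
      unfolding is_path_graph_def by blast
    have lV: "leaves V U \<subseteq> V" by (auto simp: leaves_def)
    show ?thesis
    proof (cases "W = {}")
      case True
      obtain a b where ab: "(a, b) \<in> E" using assms(2) by auto
      have abV: "a \<in> V" "b \<in> V" using ab EV by auto
      have al: "a \<in> leaves V U" and bl: "b \<in> leaves V U" using abV True W_def by auto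
      have Vab: "V \<subseteq> {a, b}" using two_leaves[OF tree al bl inU[OF ab]] .
      have anb: "a \<noteq> b" using neq[OF inU[OF ab]] .
      show ?thesis
      proof (rule core[OF fin EV assms(2) asym, where xs = "[a, b]" and att = id])
        show "distinct [a, b]" using anb by simp
        show "set [a, b] \<subseteq> V" using abV by simp
        show "\<forall>l\<in>V - set [a, b]. id l \<in> set [a, b]" using Vab by auto
        show "\<forall>u v. (u, v) \<in> E \<longrightarrow> (\<exists>i. Suc i < length [a, b] \<and> {u, v} = {[a, b] ! i, [a, b] ! Suc i})
               \<or> (u \<in> V - set [a, b] \<and> v = id u) \<or> (v \<in> V - set [a, b] \<and> u = id v)"
        proof (intro allI impI disjI1 exI[of _ 0] conjI)
          fix u v assume uv: "(u, v) \<in> E"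
          have "u \<in> {a, b}" "v \<in> {a, b}" "u \<noteq> v" using uv EV Vab neq[OF inU[OF uv]] by auto
          then show "{u, v} = {[a, b] ! 0, [a, b] ! Suc 0}" by auto
        qed simp
      qed
    next
      case False
      define att where "att l = (SOME w. {l, w} \<in> U)" for l
      have attU: "{l, att l} \<in> U" if lh: "l \<in> leaves V U" for l
      proof -
        obtain e where e: "e \<in> U" "l \<in> e" using leaf_has_edge[OF lh] by blast
        obtain a b where "e = {a, b}" using T1[OF e(1)] by (meson card_2_iff)
        then have "\<exists>w. {l, w} \<in> U" using e by (auto simp: insert_commute)
        then show ?thesis unfolding att_def by (rule someI_ex)
      qed
      have attW: "att l \<in> W" if l: "l \<in> leaves V U" for l
      proof (rule ccontr)
        assume "att l \<notin> W"
        moreover have "att l \<in> V" using T1[OF attU[OF l]] by auto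
        ultimately have "att l \<in> leaves V U" by (simp add: W_def)
        then have "V \<subseteq> {l, att l}" using two_leaves[OF tree l _ attU[OF l]] by simp
        then have "V \<subseteq> leaves V U" using l \<open>att l \<in> leaves V U\<close> by blast
        then have "W = {}" by (simp add: W_def)
        then show False using False by simp
      qed
      have VW: "V - set xs = leaves V U" using xs(2) lV by (auto simp: W_def)
      show ?thesis
      proof (rule core[OF fin EV assms(2) asym xs(1), where att = att])
        show "set xs \<subseteq> V" using xs(2) by (auto simp: W_def)
        show "\<forall>l\<in>V - set xs. att l \<in> set xs" using VW attW xs(2) by auto
        show "\<forall>u v. (u, v) \<in> E \<longrightarrow> (\<exists>i. Suc i < length xs \<and> {u, v} = {xs ! i, xs ! Suc i})
               \<or> (u \<in> V - set xs \<and> v = att u) \<or> (v \<in> V - set xs \<and> u = att v)"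
        proof (intro allI impI)
          fix u v assume uv: "(u, v) \<in> E"
          have e: "{u, v} \<in> U" using inU[OF uv] .
          have uvV: "u \<in> V" "v \<in> V" using uv EV by auto
          have unv: "u \<noteq> v" using neq[OF e] .
          show "(\<exists>i. Suc i < length xs \<and> {u, v} = {xs ! i, xs ! Suc i})
               \<or> (u \<in> V - set xs \<and> v = att u) \<or> (v \<in> V - set xs \<and> u = att v)"
          proof (cases "u \<in> W \<and> v \<in> W")
            case True
            then have "{u, v} \<in> {e \<in> U. e \<subseteq> W}" using e by simp
            then have "{u, v} \<in> {{xs ! i, xs ! Suc i} | i. Suc i < length xs}" using xs(3) by simp
            then have "\<exists>i. Suc i < length xs \<and> {u, v} = {xs ! i, xs ! Suc i}" by blast
            then show ?thesis by blast
          next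
            case False
            show ?thesis
            proof (cases "u \<in> W")
              case False
              then have ul: "u \<in> leaves V U" using uvV W_def by auto
              have "{u, v} = {u, att u}" using leaf_uniq[OF ul e _ attU[OF ul]] by simp
              then have "v = att u" using unv by (auto simp: doubleton_eq_iff)
              then show ?thesis using ul VW by auto
            next
              case True
              then have "v \<notin> W" using False by simp
              then have vl: "v \<in> leaves V U" using uvV W_def by auto
              have "{u, v} = {v, att v}" using leaf_uniq[OF vl e _ attU[OF vl]] by simp
              then have "u = att v" using unv by (auto simp: doubleton_eq_iff)
              then show ?thesis using vl VW by auto
            qed
          qed
        qed
      qed
    qed
  qed
qed

end
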